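(* Let $\mathbf{A}$ be a finite ordered metric space and $p$ a partial isomorphism of $\mathbf{A}$. Let $\mathbf{B}$ be a finite metric space containing $\mathbf{A}$ as a metric subspace, and let $q$ be a partial isometry of $\mathbf{B}$ extending $p$ with $\mathrm{Per}(q)=\mathrm{Fix}(q)$. Suppose that for all $x\in\mathrm{dom}(q)$: $q(x)\in\mathbf{A}$ if and only if $x\in\mathrm{dom}(p)$. Then there is a linear order on $\mathbf{B}$ extending the order of $\mathbf{A}$ such that $q$ is a partial isomorphism of the resulting ordered metric space $\mathbf{B}$.
   Context: An ordered metric space is a triple $(A,d,<)$ with $d$ a metric on $A$ and $<$ a linear order on $A$. A partial isometry of a metric space is an isometry between finite subsets of it; a partial isomorphism of an ordered metric space is a partial isometry that also preserves the order on its domain. $\mathrm{Fix}(q)=\{x\in\mathrm{dom}(q):q(x)=x\}$; $x\in\mathrm{dom}(q)$ is periodic if there is $n>0$ with $x,q(x),\dots,q^n(x)$ all defined and $q^n(x)=x$, and $\mathrm{Per}(q)$ is the set of periodic points. *)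

theory Defs
  imports Complex_Main
begin

definition metric_on :: "'a set \<Rightarrow> ('a \<Rightarrow> 'a \<Rightarrow> real) \<Rightarrow> bool" where
  "metric_on M d \<longleftrightarrow>
     (\<forall>x\<in>M. \<forall>y\<in>M. d x y \<ge> 0 \<and> (d x y = 0 \<longleftrightarrow> x = y) \<and> d x y = d y x) \<and>
     (\<forall>x\<in>M. \<forall>y\<in>M. \<forall>z\<in>M. d x z \<le> d x y + d y z)"

definition lin_order_on :: "'a set \<Rightarrow> ('a \<times> 'a) set \<Rightarrow> bool" where
  "lin_order_on M r \<longleftrightarrow> r \<subseteq> M \<times> M \<and> trans r \<and> irrefl r \<and> total_on M r"

definition partial_isometry :: "'a set \<Rightarrow> ('a \<Rightarrow> 'a \<Rightarrow> real) \<Rightarrow> ('a \<rightharpoonup> 'a) \<Rightarrow> bool" where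
  "partial_isometry M d q \<longleftrightarrow> finite (dom q) \<and> dom q \<subseteq> M \<and> ran q \<subseteq> M \<and>
     (\<forall>x\<in>dom q. \<forall>y\<in>dom q. d (the (q x)) (the (q y)) = d x y)"

definition partial_iso :: "'a set \<Rightarrow> ('a \<Rightarrow> 'a \<Rightarrow> real) \<Rightarrow> ('a \<times> 'a) set \<Rightarrow> ('a \<rightharpoonup> 'a) \<Rightarrow> bool" where
  "partial_iso M d r q \<longleftrightarrow> partial_isometry M d q \<and>
     (\<forall>x\<in>dom q. \<forall>y\<in>dom q. (x, y) \<in> r \<longleftrightarrow> (the (q x), the (q y)) \<in> r)"

fun pmap_pow :: "('a \<rightharpoonup> 'a) \<Rightarrow> nat \<Rightarrow> 'a \<rightharpoonup> 'a" where
  "pmap_pow q 0 x = Some x"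
| "pmap_pow q (Suc n) x = (case pmap_pow q n x of None \<Rightarrow> None | Some y \<Rightarrow> q y)"

definition Fix :: "('a \<rightharpoonup> 'a) \<Rightarrow> 'a set" where
  "Fix q = {x \<in> dom q. q x = Some x}"

definition Per :: "('a \<rightharpoonup> 'a) \<Rightarrow> 'a set" where
  "Per q = {x \<in> dom q. \<exists>n>0. pmap_pow q n x = Some x}"

end

theory Submission imports Defs begin
lemma qinj:
  assumes "metric_on B d" "partial_isometry B d q" "q x = Some z" "q y = Some z"
  shows "x = y"
proof -
  have dx: "x \<in> B" "y \<in> B" using assms unfolding partial_isometry_def by auto
  have zB: "z \<in> B" using assms unfolding partial_isometry_def ran_def by auto
  have "d z z = d x y" using assms unfolding partial_isometry_def by (metis domI option.sel)
  moreover have "d z z = 0" using assms(1) zB unfolding metric_on_def by auto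
  ultimately show ?thesis using assms(1) dx unfolding metric_on_def by auto
qed

lemma cut:
  assumes lo: "lin_order_on A r" and bA: "b \<notin> A" and LA: "L \<subseteq> A"
    and down: "\<forall>a\<in>L. \<forall>a'. (a',a)\<in>r \<longrightarrow> a'\<in>L"
  shows "lin_order_on (insert b A) (r \<union> (L \<times> {b}) \<union> ({b} \<times> (A - L)))"
    and "(r \<union> (L \<times> {b}) \<union> ({b} \<times> (A - L))) \<inter> (A \<times> A) = r"
proof -
  have rA: "r \<subseteq> A \<times> A" "trans r" "irrefl r" "total_on A r" using lo unfolding lin_order_on_def by auto
  let ?r = "r \<union> (L \<times> {b}) \<union> ({b} \<times> (A - L))"
  have "trans ?r"
  proof (rule transI)
    fix x y z assume xy: "(x,y) \<in> ?r" and yz: "(y,z) \<in> ?r"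
    show "(x,z) \<in> ?r"
    proof -
      { assume "(x,y) \<in> r" "(y,z) \<in> r" then have ?thesis using rA(2) by (meson UnI1 transD) }
      moreover { assume "(x,y) \<in> r" "y \<in> L" "z = b" then have ?thesis using down by auto }
      moreover { assume "x \<in> L" "y = b" "z \<in> A - L"
        then have "x \<noteq> z" by auto
        then have "(x,z) \<in> r \<or> (z,x) \<in> r" using rA(4) \<open>x \<in> L\<close> \<open>z \<in> A - L\<close> LA unfolding total_on_def by auto
        then have ?thesis using down \<open>x \<in> L\<close> \<open>z \<in> A - L\<close> by auto }
      moreover { assume "x = b" "y \<in> A - L" "(y,z) \<in> r"
        then have "z \<in> A" using rA(1) by auto
        moreover have "z \<notin> L" using down \<open>y \<in> A - L\<close> \<open>(y,z) \<in> r\<close> by auto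
        ultimately have ?thesis using \<open>x = b\<close> by auto }
      moreover { assume "(x,y) \<in> r" "y = b" then have False using rA(1) bA by auto }
      moreover { assume "(y,z) \<in> r" "y = b" then have False using rA(1) bA by auto }
      moreover { assume "y \<in> L" "y = b" then have False using LA bA by auto }
      ultimately show ?thesis using xy yz by blast
    qed
  qed
  moreover have "irrefl ?r" using rA(3) bA LA unfolding irrefl_def by auto
  moreover have "total_on (insert b A) ?r" using rA(4) unfolding total_on_def by auto
  moreover have "?r \<subseteq> insert b A \<times> insert b A" using rA(1) LA by auto
  ultimately show "lin_order_on (insert b A) ?r" unfolding lin_order_on_def by auto
  show "?r \<inter> (A \<times> A) = r" using rA(1) bA by auto
qed

lemma good_exists:
  assumes fB: "finite B" and AB: "A \<subseteq> B" "A \<noteq> B" and m: "metric_on B d"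
    and pi: "partial_isometry B d q" and PF: "Per q = Fix q"
  shows "\<exists>b\<in>B-A. \<forall>x. q x = Some b \<longrightarrow> x \<in> A \<or> x = b"
proof (rule ccontr)
  let ?C = "B - A"
  assume "\<not> ?thesis"
  then have "\<forall>c\<in>?C. \<exists>x. q x = Some c \<and> x \<notin> A \<and> x \<noteq> c" by auto
  moreover have "q x = Some c \<Longrightarrow> x \<in> B" for x c using pi unfolding partial_isometry_def by auto
  ultimately have "\<forall>c\<in>?C. \<exists>x. x \<in> ?C \<and> q x = Some c \<and> x \<noteq> c" by blast
  then obtain g where g: "\<And>c. c \<in> ?C \<Longrightarrow> g c \<in> ?C \<and> q (g c) = Some c \<and> g c \<noteq> c" by metis
  have gC: "(g ^^ n) c \<in> ?C" if "c \<in> ?C" for n c using that by (induction n) (use g in auto)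
  have pw: "pmap_pow q k ((g ^^ (n + k)) c) = Some ((g ^^ n) c)" if "c \<in> ?C" for k n c
    using that
  proof (induction k arbitrary: n)
    case 0 then show ?case by simp
  next
    case (Suc k)
    have "pmap_pow q k ((g ^^ (Suc n + k)) c) = Some ((g ^^ Suc n) c)" using Suc by blast
    moreover have "q ((g ^^ Suc n) c) = Some ((g ^^ n) c)" using g gC[OF Suc.prems] by simp
    ultimately show ?case by (simp add: add_Suc_right[symmetric] del: add_Suc_right funpow.simps) 
  qed
  obtain c where c: "c \<in> ?C" using AB by auto
  have "\<not> inj_on (\<lambda>n. (g ^^ n) c) {..card ?C}"
  proof
    assume "inj_on (\<lambda>n. (g ^^ n) c) {..card ?C}"
    moreover have "(\<lambda>n. (g ^^ n) c) ` {..card ?C} \<subseteq> ?C" using gC c by auto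
    ultimately have "card {..card ?C} \<le> card ?C" using fB by (meson card_inj_on_le finite_Diff)
    then show False by simp
  qed
  then obtain i j where ij: "i < j" "(g ^^ i) c = (g ^^ j) c"
    unfolding inj_on_def by (metis linorder_neqE_nat)
  let ?u = "(g ^^ j) c"
  have uC: "?u \<in> ?C" using gC c by blast
  have "pmap_pow q (j - i) ?u = Some ?u"
    using pw[OF c, of "j - i" i] ij by simp
  moreover have "?u \<in> dom q"
  proof -
    obtain j' where "j = Suc j'" using ij by (cases j) auto
    then show ?thesis using g gC[OF c, of j'] by auto
  qed
  ultimately have "?u \<in> Per q" unfolding Per_def using ij by (metis (mono_tags, lifting) mem_Collect_eq zero_less_diff)
  then have "q ?u = Some ?u" using PF unfolding Fix_def by auto
  moreover have "q (g ?u) = Some ?u" "g ?u \<noteq> ?u" using g uC by auto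
  ultimately show False using qinj[OF m pi] by metis
qed

definition ins_cut :: "'a set \<Rightarrow> ('a \<times> 'a) set \<Rightarrow> 'a set \<Rightarrow> 'a \<Rightarrow> ('a \<times> 'a) set" where
  "ins_cut A r L b = r \<union> (L \<times> {b}) \<union> ({b} \<times> (A - L))"

lemma main:
  assumes fB: "finite B" and m: "metric_on B d" and qi: "partial_isometry B d q" and PF: "Per q = Fix q"
  shows "card (B - A) = n \<Longrightarrow> finite A \<Longrightarrow> lin_order_on A rA \<Longrightarrow> A \<subseteq> B \<Longrightarrow> partial_iso A d rA p
    \<Longrightarrow> p \<subseteq>\<^sub>m q \<Longrightarrow> (\<forall>x\<in>dom q. the (q x) \<in> A \<longleftrightarrow> x \<in> dom p)
    \<Longrightarrow> \<exists>rB. lin_order_on B rB \<and> rB \<inter> (A \<times> A) = rA \<and> partial_iso B d rB q"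
proof (induction n arbitrary: A rA p rule: less_induct)
  case (less n A rA p)
  note cardn = less.prems(1) and fA = less.prems(2) and lo = less.prems(3) and AB = less.prems(4)
    and pi = less.prems(5) and pq = less.prems(6) and cond = less.prems(7)
  have rAA: "rA \<subseteq> A \<times> A" using lo unfolding lin_order_on_def by auto
  have domp: "dom p \<subseteq> A" and ranp: "ran p \<subseteq> A" using pi unfolding partial_iso_def partial_isometry_def by auto
  have pord: "\<forall>x\<in>dom p. \<forall>y\<in>dom p. (x, y) \<in> rA \<longleftrightarrow> (the (p x), the (p y)) \<in> rA"
    using pi unfolding partial_iso_def by auto
  have pqx: "p x = Some y \<Longrightarrow> q x = Some y" for x y using pq unfolding map_le_def by (metis domI)
  have domq: "dom q \<subseteq> B" and ranq: "ran q \<subseteq> B" using qi unfolding partial_isometry_def by auto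
  show ?case
  proof (cases "A = B")
    case True
    have "q = p"
    proof
      fix x show "q x = p x"
      proof (cases "x \<in> dom q")
        case True
        then obtain y where y: "q x = Some y" by auto
        then have "y \<in> A" using ranq \<open>A = B\<close> unfolding ran_def by auto
        then have "x \<in> dom p" using cond True y by auto
        then show ?thesis using pqx y by auto
      next
        case False
        then show ?thesis using pqx by (cases "p x") auto
      qed
    qed
    then show ?thesis using lo pi rAA True by (intro exI[of _ rA]) auto
  next
    case False
    then obtain b where bBA: "b \<in> B - A" and good: "\<forall>x. q x = Some b \<longrightarrow> x \<in> A \<or> x = b"
      using good_exists[OF fB AB _ m qi PF] by blast
    define A' where "A' = insert b A"
    define p' where "p' = (\<lambda>x. if x \<in> dom q \<and> the (q x) \<in> A' then q x else None)"
    have bA: "b \<notin> A" using bBA by auto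
    have p'q: "p' x = Some y \<Longrightarrow> q x = Some y \<and> y \<in> A'" for x y
      unfolding p'_def by (auto split: if_splits)
    have domp': "dom p' = {x\<in>dom q. the (q x) \<in> A'}" unfolding p'_def dom_def by auto
    have classify: "x \<in> dom p' \<Longrightarrow> (x \<in> dom p \<and> p' x = p x) \<or> (q x = Some b \<and> p' x = Some b)" for x
    proof -
      assume "x \<in> dom p'"
      then obtain y where y: "p' x = Some y" by auto
      then have qy: "q x = Some y" "y \<in> A'" using p'q by auto
      show ?thesis
      proof (cases "y \<in> A")
        case True
        then have "x \<in> dom p" using cond qy by auto
        then obtain z where "p x = Some z" by auto
        then show ?thesis using pqx qy y by auto
      next
        case False
        then show ?thesis using qy y A'_def by auto
      qed
    qed
    have dp'A': "dom p' \<subseteq> A'"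
    proof
      fix x assume "x \<in> dom p'"
      then show "x \<in> A'" using classify[of x] domp good A'_def by auto
    qed
    have rp'A': "ran p' \<subseteq> A'" using p'q unfolding ran_def by auto
    have pp': "p \<subseteq>\<^sub>m p'"
      unfolding map_le_def
    proof
      fix x assume "x \<in> dom p"
      then obtain z where z: "p x = Some z" by auto
      then have "z \<in> A" using ranp unfolding ran_def by auto
      then show "p x = p' x" using z pqx[OF z] unfolding p'_def A'_def by auto
    qed
    have cond': "\<forall>x\<in>dom q. the (q x) \<in> A' \<longleftrightarrow> x \<in> dom p'" using domp' by auto
    have iso': "partial_isometry A' d p'"
    proof -
      have "finite (dom p')" using qi domp' unfolding partial_isometry_def by auto
      moreover have "\<forall>x\<in>dom p'. \<forall>y\<in>dom p'. d (the (p' x)) (the (p' y)) = d x y"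
      proof (intro ballI)
        fix x y assume "x \<in> dom p'" "y \<in> dom p'"
        then have "the (p' x) = the (q x)" "the (p' y) = the (q y)" "x \<in> dom q" "y \<in> dom q"
          using p'q by fastforce+
        then show "d (the (p' x)) (the (p' y)) = d x y" using qi unfolding partial_isometry_def by auto
      qed
      ultimately show ?thesis using dp'A' rp'A' unfolding partial_isometry_def by auto
    qed
    have qinj': "q x = Some z \<Longrightarrow> q y = Some z \<Longrightarrow> x = y" for x y z using qinj[OF m qi] by blast
    have "\<exists>L. L \<subseteq> A \<and> (\<forall>a\<in>L. \<forall>a'. (a',a)\<in>rA \<longrightarrow> a'\<in>L) \<and>
       (\<forall>y\<in>dom p. \<forall>x. q x = Some b \<longrightarrow>
          ((x,y) \<in> ins_cut A rA L b \<longleftrightarrow> (b, the (p y)) \<in> ins_cut A rA L b) \<and>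
          ((y,x) \<in> ins_cut A rA L b \<longleftrightarrow> (the (p y), b) \<in> ins_cut A rA L b))"
    proof (cases "\<exists>x0\<in>A. q x0 = Some b")
      case True
      then obtain x0 where x0: "x0 \<in> A" "q x0 = Some b" by auto
      have x0p: "x0 \<notin> dom p" using cond x0 bA by force
      define L where "L = {a\<in>A. \<exists>y\<in>dom p. (y,x0)\<in>rA \<and> (a = the (p y) \<or> (a, the (p y))\<in>rA)}"
      have LA: "L \<subseteq> A" unfolding L_def by auto
      have down: "\<forall>a\<in>L. \<forall>a'. (a',a)\<in>rA \<longrightarrow> a'\<in>L"
      proof (intro ballI allI impI)
        fix a a' assume "a \<in> L" "(a',a) \<in> rA"
        then obtain y where y: "y\<in>dom p" "(y,x0)\<in>rA" "a = the (p y) \<or> (a, the (p y))\<in>rA"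
          unfolding L_def by auto
        have "(a', the (p y)) \<in> rA" using y(3) \<open>(a',a) \<in> rA\<close> lo unfolding lin_order_on_def
          by (metis transD)
        moreover have "a' \<in> A" using \<open>(a',a) \<in> rA\<close> rAA by auto
        ultimately show "a' \<in> L" unfolding L_def using y by auto
      qed
      have key: "the (p y) \<in> L \<longleftrightarrow> (y,x0) \<in> rA" if yp: "y \<in> dom p" for y
      proof
        assume "the (p y) \<in> L"
        then obtain y' where y': "y'\<in>dom p" "(y',x0)\<in>rA" "the (p y) = the (p y') \<or> (the (p y), the (p y'))\<in>rA"
          unfolding L_def by auto
        have "y = y' \<or> (y,y') \<in> rA"
        proof (cases "the (p y) = the (p y')")
          case True
          then have "q y = q y'" using pqx yp y'(1) by (metis domD option.sel)
          then show ?thesis using qinj' yp by (metis domD pqx)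
        next
          case False
          then show ?thesis using y'(3) pord yp y'(1) by auto
        qed
        then show "(y,x0) \<in> rA" using y'(2) lo unfolding lin_order_on_def by (metis transD)
      next
        assume "(y,x0) \<in> rA"
        moreover have "the (p y) \<in> A" using yp ranp unfolding ran_def by auto
        ultimately show "the (p y) \<in> L" unfolding L_def using yp by auto
      qed
      have asym: "(x0,y) \<in> rA \<longleftrightarrow> (y,x0) \<notin> rA" if "y \<in> dom p" for y
      proof -
        have "y \<noteq> x0" "y \<in> A" using that x0p domp by auto
        then show ?thesis using lo x0(1) unfolding lin_order_on_def total_on_def irrefl_def
          by (metis transD)
      qed
      show ?thesis
      proof (intro exI[of _ L] conjI LA down ballI allI impI)
        fix y x assume yp: "y \<in> dom p" and qx: "q x = Some b"
        have "x = x0" using qinj' qx x0(2) by auto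
        have yA: "y \<in> A" "the (p y) \<in> A" using yp domp ranp unfolding ran_def by auto
        have R1: "(x0,y) \<in> ins_cut A rA L b \<longleftrightarrow> (x0,y) \<in> rA" using x0(1) bA yA rAA unfolding ins_cut_def by auto
        have R2: "(y,x0) \<in> ins_cut A rA L b \<longleftrightarrow> (y,x0) \<in> rA" using x0(1) bA yA rAA unfolding ins_cut_def by auto
        have R3: "(b, the (p y)) \<in> ins_cut A rA L b \<longleftrightarrow> the (p y) \<notin> L" using yA bA rAA unfolding ins_cut_def by auto
        have R4: "(the (p y), b) \<in> ins_cut A rA L b \<longleftrightarrow> the (p y) \<in> L" using yA bA rAA unfolding ins_cut_def by auto
        show "(x,y) \<in> ins_cut A rA L b \<longleftrightarrow> (b, the (p y)) \<in> ins_cut A rA L b"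
          using R1 R3 key[OF yp] asym[OF yp] \<open>x = x0\<close> by auto
        show "(y,x) \<in> ins_cut A rA L b \<longleftrightarrow> (the (p y), b) \<in> ins_cut A rA L b"
          using R2 R4 key[OF yp] \<open>x = x0\<close> by auto
      qed
    next
      case False
      have dA: "\<forall>a\<in>A. \<forall>a'. (a', a) \<in> rA \<longrightarrow> a' \<in> A" using rAA by auto
      show ?thesis
      proof (intro exI[of _ A] conjI dA subset_refl ballI allI impI)
        fix y x assume yp: "y \<in> dom p" and qx: "q x = Some b"
        have "x = b" using good qx False by auto
        have yA: "y \<in> A" "the (p y) \<in> A" using yp domp ranp unfolding ran_def by auto
        show "(x,y) \<in> ins_cut A rA A b \<longleftrightarrow> (b, the (p y)) \<in> ins_cut A rA A b"
          using yA bA rAA \<open>x = b\<close> unfolding ins_cut_def by auto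
        show "(y,x) \<in> ins_cut A rA A b \<longleftrightarrow> (the (p y), b) \<in> ins_cut A rA A b"
          using yA bA rAA \<open>x = b\<close> unfolding ins_cut_def by auto
      qed
    qed
    then obtain L where LA: "L \<subseteq> A" and down: "\<forall>a\<in>L. \<forall>a'. (a',a)\<in>rA \<longrightarrow> a'\<in>L"
      and hcut: "\<forall>y\<in>dom p. \<forall>x. q x = Some b \<longrightarrow>
          ((x,y) \<in> ins_cut A rA L b \<longleftrightarrow> (b, the (p y)) \<in> ins_cut A rA L b) \<and>
          ((y,x) \<in> ins_cut A rA L b \<longleftrightarrow> (the (p y), b) \<in> ins_cut A rA L b)" by blast
    define R where "R = ins_cut A rA L b"
    have loR: "lin_order_on A' R" and RA: "R \<inter> (A \<times> A) = rA"
      using cut[OF lo bA LA down] unfolding R_def ins_cut_def A'_def by auto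
    have irR: "(x,x) \<notin> R" for x using loR unfolding lin_order_on_def irrefl_def by auto
    have ordR: "\<forall>x\<in>dom p'. \<forall>y\<in>dom p'. (x,y) \<in> R \<longleftrightarrow> (the (p' x), the (p' y)) \<in> R"
    proof (intro ballI)
      fix x y assume xd: "x \<in> dom p'" and yd: "y \<in> dom p'"
      show "(x,y) \<in> R \<longleftrightarrow> (the (p' x), the (p' y)) \<in> R"
      proof (cases "x \<in> dom p \<and> p' x = p x")
        case xc: True
        show ?thesis
        proof (cases "y \<in> dom p \<and> p' y = p y")
          case yc: True
          have "x \<in> A" "y \<in> A" "the (p x) \<in> A" "the (p y) \<in> A"
            using xc yc domp ranp unfolding ran_def by auto
          then have "(x,y) \<in> R \<longleftrightarrow> (x,y) \<in> rA" "(the (p x), the (p y)) \<in> R \<longleftrightarrow> (the (p x), the (p y)) \<in> rA"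
            using RA by auto
          then show ?thesis using pord xc yc by auto
        next
          case False
          then have "q y = Some b" "p' y = Some b" using classify yd by auto
          then show ?thesis using hcut xc unfolding R_def by auto
        qed
      next
        case False
        then have qx: "q x = Some b" "p' x = Some b" using classify xd by auto
        show ?thesis
        proof (cases "y \<in> dom p \<and> p' y = p y")
          case yc: True
          then show ?thesis using hcut qx unfolding R_def by auto
        next
          case False
          then have "q y = Some b" "p' y = Some b" using classify yd by auto
          then have "x = y" using qinj' qx by auto
          then show ?thesis using irR by auto
        qed
      qed
    qed
    have piso': "partial_iso A' d R p'" using iso' ordR unfolding partial_iso_def by auto
    have lt: "card (B - A') < n"
    proof -
      have "B - A' \<subset> B - A" using bBA unfolding A'_def by auto
      then show ?thesis using cardn fB by (metis finite_Diff psubset_card_mono)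
    qed
    have "finite A'" "A' \<subseteq> B" using fA AB bBA unfolding A'_def by auto
    moreover have "p' \<subseteq>\<^sub>m q" unfolding map_le_def using p'q by (metis domD)
    ultimately obtain rB where rB: "lin_order_on B rB" "rB \<inter> (A' \<times> A') = R" "partial_iso B d rB q"
      using less.IH[OF lt refl _ loR _ piso' _ cond'] by blast
    have "rB \<inter> (A \<times> A) = rA"
    proof -
      have "rB \<inter> (A \<times> A) = (rB \<inter> (A' \<times> A')) \<inter> (A \<times> A)" unfolding A'_def by auto
      then show ?thesis using rB(2) RA by simp
    qed
    then show ?thesis using rB by auto
  qed
qed

theorem proposition4p6:
  fixes A B :: "'a set" and d :: "'a \<Rightarrow> 'a \<Rightarrow> real" and rA :: "('a \<times> 'a) set"
    and p q :: "'a \<rightharpoonup> 'a"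
  assumes "finite A" and "lin_order_on A rA"
    and "finite B" and "A \<subseteq> B" and "metric_on B d"
    and "partial_iso A d rA p"
    and "partial_isometry B d q" and "p \<subseteq>\<^sub>m q"
    and "Per q = Fix q"
    and "\<forall>x\<in>dom q. the (q x) \<in> A \<longleftrightarrow> x \<in> dom p"
  shows "\<exists>rB. lin_order_on B rB \<and> rB \<inter> (A \<times> A) = rA \<and> partial_iso B d rB q"
  using main[OF assms(3,5,7,9) refl assms(1,2,4,6,8,10)] .

end
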